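(* Let $n\geq 0$ and $0\leq m\leq n$ be integers. Then \[ \sum_{\substack{k=0\\ k\neq m}}^{n}{n\brack k}\frac{(q/z;q)_k (z;q)_{n-k}}{1-q^{k-m}} z^k =(-1)^m q^{\binom{m+1}{2}}{n\brack m}(zq^{-m};q)_n \left(\sum_{k=0}^{n-1} \frac{zq^{k-m}}{1-zq^{k-m}}- \sum_{\substack{k=0\\ k\neq m}}^{n} \frac{q^{k-m}}{1-q^{k-m}} \right). \]
   Context: For $N\geq 0$, $(x;q)_N=(1-x)(1-xq)\cdots(1-xq^{N-1})$ (with $(x;q)_0=1$). The $q$-binomial coefficient is ${n\brack k}=\frac{(q;q)_n}{(q;q)_k(q;q)_{n-k}}$ for $0\leq k\leq n$ and $0$ otherwise. The identity is one of rational functions in $q$ and $z$. *)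

theory Defs
  imports Complex_Main
begin

definition qpoch :: "'a::field \<Rightarrow> 'a \<Rightarrow> nat \<Rightarrow> 'a" where
  "qpoch x q N = (\<Prod>i<N. (1 - x * q ^ i))"

definition qbinom :: "'a::field \<Rightarrow> nat \<Rightarrow> nat \<Rightarrow> 'a" where
  "qbinom q n k = (if k \<le> n then qpoch q q n / (qpoch q q k * qpoch q q (n - k)) else 0)"

end

theory Submission
  imports Defs "HOL-Computational_Algebra.Polynomial"
begin


lemma pderiv_sum': "pderiv (sum f A) = (\<Sum>x\<in>A. pderiv (f x))"
  by (induction A rule: infinite_finite_induct) (simp_all add: pderiv_add)

lemma poly_pderiv_lin_prod:
  fixes s :: "nat \<Rightarrow> 'a::field"
  assumes "finite S"
  shows "poly (pderiv (\<Prod>j\<in>S. [:- s j, 1:])) x = (\<Sum>a\<in>S. \<Prod>j\<in>S-{a}. x - s j)"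
  by (simp add: pderiv_prod pderiv_pCons poly_sum poly_prod)

lemma deg_lin_prod:
  fixes s :: "nat \<Rightarrow> 'a::field"
  assumes "finite S"
  shows "degree (\<Prod>j\<in>S. [:- s j, 1:]) \<le> card S"
proof -
  have "degree (\<Prod>j\<in>S. [:- s j, 1:]) \<le> sum (degree \<circ> (\<lambda>j. [:- s j, 1:])) S"
    by (rule degree_prod_sum_le[OF assms])
  also have "\<dots> = card S" by simp
  finally show ?thesis .
qed

lemma GL:
  fixes t r :: "nat \<Rightarrow> 'a::field"
  assumes inj: "inj_on t {0..n}" and mn: "m \<le> n" and rt: "\<forall>i<n. r i \<noteq> t m"
  shows "(\<Sum>k\<in>{0..n}-{m}. (\<Prod>i<n. t k - r i) / ((\<Prod>j\<in>{0..n}-{k}. t k - t j) * (t m - t k)))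
    = (\<Prod>i<n. t m - r i) / (\<Prod>j\<in>{0..n}-{m}. t m - t j)
       * ((\<Sum>i<n. 1/(t m - r i)) - (\<Sum>j\<in>{0..n}-{m}. 1/(t m - t j)))"
proof -
  define T where "T = {0..n}"
  define W where "W k = (\<Prod>j\<in>T-{k}. t k - t j)" for k
  define P where "P x = (\<Prod>i<n. x - r i)" for x
  have fT: "finite T" by (simp add: T_def)
  have tne: "t k \<noteq> t j" if "k \<in> T" "j \<in> T" "k \<noteq> j" for k j
    using inj that unfolding T_def inj_on_def by blast
  have Wne: "W k \<noteq> 0" if "k \<in> T" for k
    unfolding W_def using tne that by (auto simp: prod_zero_iff fT)
  have mT: "m \<in> T" using mn by (simp add: T_def)
  define Pp where "Pp = (\<Prod>i<n. [:- r i, 1:])"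
  define L where "L = (\<Sum>k\<in>T. smult (P (t k) / W k) (\<Prod>j\<in>T-{k}. [:- t j, 1:]))"
  have polyPp: "poly Pp x = P x" for x by (simp add: Pp_def P_def poly_prod)
  have degPp: "degree Pp \<le> n" unfolding Pp_def using deg_lin_prod[of "{..<n}" r] by simp
  have degL: "degree L \<le> n" unfolding L_def
  proof (rule degree_sum_le[OF fT])
    fix k assume "k \<in> T"
    have "degree (\<Prod>j\<in>T-{k}. [:- t j, 1:]) \<le> card (T - {k})" by (rule deg_lin_prod) (simp add: fT)
    also have "\<dots> = n" using \<open>k \<in> T\<close> by (simp add: T_def)
    finally show "degree (smult (P (t k) / W k) (\<Prod>j\<in>T-{k}. [:- t j, 1:])) \<le> n"
      using degree_smult_le order_trans by blast
  qed
  have polyL: "poly L (t i) = P (t i)" if "i \<in> T" for i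
  proof -
    have "poly L (t i) = (\<Sum>k\<in>T. P (t k) / W k * (\<Prod>j\<in>T-{k}. t i - t j))"
      by (simp add: L_def poly_sum poly_prod)
    also have "\<dots> = P (t i) / W i * (\<Prod>j\<in>T-{i}. t i - t j)"
    proof (rule sum.remove[OF fT that, THEN trans])
      have "(\<Sum>k\<in>T-{i}. P (t k) / W k * (\<Prod>j\<in>T-{k}. t i - t j)) = 0"
        by (rule sum.neutral) (use that fT in \<open>auto simp: prod_zero_iff\<close>)
      then show "P (t i) / W i * (\<Prod>j\<in>T-{i}. t i - t j) + (\<Sum>k\<in>T-{i}. P (t k) / W k * (\<Prod>j\<in>T-{k}. t i - t j)) = P (t i) / W i * (\<Prod>j\<in>T-{i}. t i - t j)" by simp
    qed
    also have "\<dots> = P (t i)" using Wne[OF that] by (simp add: W_def)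
    finally show ?thesis .
  qed
  have LP: "L = Pp"
  proof (rule poly_eqI_degree[of "t ` T"])
    show "\<And>x. x \<in> t ` T \<Longrightarrow> poly L x = poly Pp x" using polyL polyPp by auto
    have "card (t ` T) = n + 1" using inj by (simp add: T_def card_image)
    then show "degree L < card (t ` T)" "degree Pp < card (t ` T)" using degL degPp by auto
  qed
  define A where "A = (\<Sum>i<n. 1/(t m - r i))"
  define B where "B = (\<Sum>j\<in>T-{m}. 1/(t m - t j))"
  define S where "S = (\<Sum>k\<in>T-{m}. P (t k) / (W k * (t m - t k)))"
  have Pm: "P (t m) \<noteq> 0" using rt by (auto simp: P_def)
  have dPp: "poly (pderiv Pp) (t m) = P (t m) * A"
  proof -
    have "poly (pderiv Pp) (t m) = (\<Sum>a<n. \<Prod>j\<in>{..<n}-{a}. t m - r j)"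
      unfolding Pp_def by (rule poly_pderiv_lin_prod) simp
    also have "\<dots> = (\<Sum>a<n. P (t m) * (1 / (t m - r a)))"
    proof (rule sum.cong[OF refl])
      fix a assume "a \<in> {..<n}"
      then have "t m - r a \<noteq> 0" using rt by auto
      then show "(\<Prod>j\<in>{..<n}-{a}. t m - r j) = P (t m) * (1 / (t m - r a))"
        using \<open>a \<in> {..<n}\<close> by (simp add: prod_diff1 P_def)
    qed
    finally show ?thesis by (simp add: A_def sum_distrib_left)
  qed
  have dL: "poly (pderiv L) (t m) = W m * S + P (t m) * B"
  proof -
    have "poly (pderiv L) (t m) = (\<Sum>k\<in>T. P (t k) / W k * (\<Sum>a\<in>T-{k}. \<Prod>j\<in>T-{k}-{a}. t m - t j))"
      unfolding L_def using fT by (simp add: pderiv_sum' pderiv_smult poly_sum poly_pderiv_lin_prod)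
    also have "\<dots> = P (t m) / W m * (\<Sum>a\<in>T-{m}. \<Prod>j\<in>T-{m}-{a}. t m - t j)
        + (\<Sum>k\<in>T-{m}. P (t k) / W k * (\<Sum>a\<in>T-{k}. \<Prod>j\<in>T-{k}-{a}. t m - t j))"
      by (rule sum.remove[OF fT mT])
    also have "(\<Sum>a\<in>T-{m}. \<Prod>j\<in>T-{m}-{a}. t m - t j) = (\<Sum>a\<in>T-{m}. W m * (1 / (t m - t a)))"
    proof (rule sum.cong[OF refl])
      fix a assume a: "a \<in> T-{m}"
      then have "t m - t a \<noteq> 0" using tne mT by auto
      then show "(\<Prod>j\<in>T-{m}-{a}. t m - t j) = W m * (1 / (t m - t a))"
        using a fT by (simp add: prod_diff1 W_def)
    qed
    also have "(\<Sum>k\<in>T-{m}. P (t k) / W k * (\<Sum>a\<in>T-{k}. \<Prod>j\<in>T-{k}-{a}. t m - t j))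
       = (\<Sum>k\<in>T-{m}. P (t k) / W k * (W m / (t m - t k)))"
    proof (rule sum.cong[OF refl])
      fix k assume k: "k \<in> T-{m}"
      have "(\<Sum>a\<in>T-{k}. \<Prod>j\<in>T-{k}-{a}. t m - t j) = (\<Prod>j\<in>T-{k}-{m}. t m - t j)
          + (\<Sum>a\<in>T-{k}-{m}. \<Prod>j\<in>T-{k}-{a}. t m - t j)"
        by (rule sum.remove) (use k mT fT in auto)
      also have "(\<Sum>a\<in>T-{k}-{m}. \<Prod>j\<in>T-{k}-{a}. t m - t j) = 0"
        by (rule sum.neutral) (use k mT fT in \<open>auto simp: prod_zero_iff\<close>)
      also have "(\<Prod>j\<in>T-{k}-{m}. t m - t j) = (\<Prod>j\<in>T-{m}-{k}. t m - t j)"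
        by (metis Diff_insert Diff_insert2)
      also have "\<dots> = W m / (t m - t k)"
        using k fT tne[of m k] mT by (simp add: prod_diff1 W_def)
      finally show "P (t k) / W k * (\<Sum>a\<in>T-{k}. \<Prod>j\<in>T-{k}-{a}. t m - t j) = P (t k) / W k * (W m / (t m - t k))"
        by simp
    qed
    finally show ?thesis
      using Wne[OF mT] by (simp add: S_def B_def sum_distrib_left field_simps)
  qed
  have "P (t m) * A = W m * S + P (t m) * B" using dPp dL LP by simp
  then have "S = P (t m) / W m * (A - B)"
    using Wne[OF mT] by (simp add: field_simps)
  then show ?thesis by (simp add: S_def P_def W_def A_def B_def T_def)
qed



lemma prod_split_at:
  fixes k n :: nat
  assumes "k \<le> n"
  shows "(\<Prod>i<n. f i) = (\<Prod>i<k. f i) * (\<Prod>i<n-k. f (k+i))"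
proof -
  obtain d where n: "n = k + d" using le_Suc_ex[OF assms] by blast
  have "(\<Prod>i<k+d. f i) = (\<Prod>i<k. f i) * (\<Prod>i<d. f (k+i))"
  proof (induction d)
    case 0 show ?case by simp
  next
    case (Suc d)
    have "(\<Prod>i<k+Suc d. f i) = (\<Prod>i<k+d. f i) * f (k+d)" by simp
    also have "\<dots> = (\<Prod>i<k. f i) * ((\<Prod>i<d. f (k+i)) * f (k+d))" using Suc by (simp only: mult.assoc)
    also have "\<dots> = (\<Prod>i<k. f i) * (\<Prod>i<Suc d. f (k+i))" by simp
    finally show ?case .
  qed
  then show ?thesis using n by simp
qed

lemma L1:
  fixes q a :: "'a::field"
  shows "(\<Prod>i<k. q^k - a*q^i) = q^(k choose 2) * (\<Prod>i<k. q^(Suc i) - a)"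
proof (induction k)
  case 0 then show ?case by (simp add: numeral_2_eq_2)
next
  case (Suc k)
  have "(\<Prod>i<Suc k. q^Suc k - a*q^i) = (q^Suc k - a) * (\<Prod>i<k. q * (q^k - a*q^i))"
    by (subst prod.lessThan_Suc_shift) (simp add: algebra_simps)
  also have "\<dots> = (q^Suc k - a) * q^k * (\<Prod>i<k. q^k - a*q^i)"
    by (simp add: prod.distrib)
  also have "\<dots> = q^(Suc k choose 2) * (\<Prod>i<Suc k. q^(Suc i) - a)"
    using Suc by (simp add: power_add numeral_2_eq_2 mult_ac)
  finally show ?case .
qed

lemma L2:
  fixes q :: "'a::field"
  shows "(\<Prod>i<N. q^k - q^(k+Suc i)) = q^(k*N) * qpoch q q N"
proof -
  have "(\<Prod>i<N. q^k - q^(k+Suc i)) = (\<Prod>i<N. q^k * (1 - q*q^i))"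
    by (rule prod.cong) (simp_all add: power_add right_diff_distrib)
  also have "\<dots> = q^(k*N) * qpoch q q N"
    by (simp only: prod.distrib prod_constant qpoch_def card_lessThan power_mult)
  finally show ?thesis .
qed

lemma L3:
  fixes q z :: "'a::field"
  shows "(\<Prod>i<N. q^k - z*q^(k+i)) = q^(k*N) * qpoch z q N"
proof -
  have "(\<Prod>i<N. q^k - z*q^(k+i)) = (\<Prod>i<N. q^k * (1 - z*q^i))"
    by (rule prod.cong) (simp_all add: power_add right_diff_distrib mult_ac)
  also have "\<dots> = q^(k*N) * qpoch z q N"
    by (simp only: prod.distrib prod_constant qpoch_def card_lessThan power_mult)
  finally show ?thesis .
qed

lemma negprod:
  fixes f g :: "nat \<Rightarrow> 'a::field"
  shows "(\<Prod>i<k. f i - g i) = (-1)^k * (\<Prod>i<k. g i - f i)"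
proof -
  have "(\<Prod>i<k. f i - g i) = (\<Prod>i<k. (-1) * (g i - f i))" by simp
  also have "\<dots> = (-1)^k * (\<Prod>i<k. g i - f i)" by (simp only: prod.distrib) simp
  finally show ?thesis .
qed



lemma choose_sq: "(Suc m choose 2) + (m choose 2) = m*m"
  by (induction m) (simp_all add: numeral_2_eq_2)

theorem corollary3p1:
  fixes q z :: "'a::field" and n m :: nat
  assumes "m \<le> n"
    and "q \<noteq> 0" and "z \<noteq> 0"
    and "\<forall>j\<in>{1..n}. q ^ j \<noteq> 1"
    and "\<forall>k<n. 1 - z * q powi (int k - int m) \<noteq> 0"
  shows "(\<Sum>k\<in>{0..n} - {m}. qbinom q n k * qpoch (q / z) q k * qpoch z q (n - k)
             / (1 - q powi (int k - int m)) * z ^ k)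
       = (-1) ^ m * q ^ ((m + 1) choose 2) * qbinom q n m * qpoch (z * q powi (- int m)) q n
         * ((\<Sum>k<n. z * q powi (int k - int m) / (1 - z * q powi (int k - int m)))
            - (\<Sum>k\<in>{0..n} - {m}. q powi (int k - int m) / (1 - q powi (int k - int m))))"
proof -
  note mn = assms(1) and q0 = assms(2) and z0 = assms(3) and qj = assms(4) and zr = assms(5)
  define t where "t k = q^k" for k :: nat
  define r where "r i = z*q^i" for i :: nat
  define K where "K = qpoch q q n"
  define P where "P x = (\<Prod>i<n. x - r i)" for x
  define W where "W k = (\<Prod>j\<in>{0..n}-{k}. t k - t j)" for k
  define A where "A = (\<Sum>i<n. 1/(t m - r i))"
  define B where "B = (\<Sum>j\<in>{0..n}-{m}. 1/(t m - t j))"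
  have qk0: "q^k \<noteq> 0" for k using q0 by simp
  have pw: "q powi (int k - int m) = q^k / q^m" for k
    using q0 by (simp add: power_int_diff)
  have pwm: "z * q powi (- int m) = z / q^m"
    using q0 by (simp add: power_int_minus divide_inverse)
  have tne: "t j \<noteq> t k" if "j < k" "k \<le> n" for j k
  proof
    assume "t j = t k"
    moreover have "q^k = q^j * q^(k-j)" using that by (simp flip: power_add)
    ultimately have "q^j * q^(k-j) = q^j * 1" by (simp add: t_def)
    then have "q^(k-j) = 1" using q0 by simp
    moreover have "k - j \<in> {1..n}" using that by auto
    ultimately show False using qj by blast
  qed
  have inj: "inj_on t {0..n}"
    unfolding inj_on_def by (metis atLeastAtMost_iff linorder_neqE_nat tne)
  have rt: "\<forall>i<n. r i \<noteq> t m"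
  proof (intro allI impI notI)
    fix i assume "i < n" "r i = t m"
    then have "1 - z * (q^i / q^m) = 0" using qk0 by (simp add: r_def t_def field_simps)
    then show False using zr \<open>i < n\<close> pw by auto
  qed
  have Qne: "qpoch q q k \<noteq> 0" if "k \<le> n" for k
  proof -
    have "1 - q*q^i \<noteq> 0" if "i < k" for i
      using qj \<open>k \<le> n\<close> that by (auto simp flip: power_Suc)
    then show ?thesis by (simp add: qpoch_def)
  qed
  have Wk: "W k = (-1)^k * q^(k choose 2) * (q^(k*(n-k)) * qpoch q q (n-k)) * qpoch q q k" if "k \<le> n" for k
  proof -
    have seteq: "{0..n}-{k} = {..<k} \<union> (\<lambda>i. Suc k + i) ` {..<n-k}"
    proof (rule set_eqI, rule iffI)
      fix x assume "x \<in> {0..n}-{k}"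
      then show "x \<in> {..<k} \<union> (\<lambda>i. Suc k + i) ` {..<n-k}"
        by (cases "x < k") (auto intro!: image_eqI[of _ _ "x - Suc k"])
    qed (use that in auto)
    have "W k = (\<Prod>j<k. t k - t j) * (\<Prod>i<n-k. t k - t (Suc k + i))"
    proof -
      have "W k = (\<Prod>j<k. t k - t j) * (\<Prod>j\<in>(\<lambda>i. Suc k + i) ` {..<n-k}. t k - t j)"
        unfolding W_def seteq by (rule prod.union_disjoint) auto
      also have "(\<Prod>j\<in>(\<lambda>i. Suc k + i) ` {..<n-k}. t k - t j) = (\<Prod>i<n-k. t k - t (Suc k + i))"
        by (subst prod.reindex) (auto simp: inj_on_def)
      finally show ?thesis .
    qed
    also have "(\<Prod>i<n-k. t k - t (Suc k + i)) = q^(k*(n-k)) * qpoch q q (n-k)"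
      using L2[where q=q and k=k and N="n-k"] by (simp add: t_def)
    also have "(\<Prod>j<k. t k - t j) = (-1)^k * q^(k choose 2) * qpoch q q k"
    proof -
      have "(\<Prod>j<k. t k - t j) = (\<Prod>j<k. q^k - 1*q^j)" by (simp add: t_def)
      also have "\<dots> = q^(k choose 2) * (\<Prod>i<k. q^(Suc i) - 1)" by (rule L1)
      also have "(\<Prod>i<k. q^(Suc i) - 1) = (-1)^k * (\<Prod>i<k. 1 - q^(Suc i))" by (rule negprod)
      finally show ?thesis by (simp add: qpoch_def)
    qed
    finally show ?thesis by (simp add: mult_ac)
  qed
  have Pk: "P (t k) = q^(k choose 2) * (\<Prod>i<k. q^Suc i - z) * (q^(k*(n-k)) * qpoch z q (n-k))"
    if "k \<le> n" for k
  proof -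
    have "P (t k) = (\<Prod>i<k. q^k - z*q^i) * (\<Prod>i<n-k. q^k - z*q^(k+i))"
      unfolding P_def t_def r_def by (rule prod_split_at[OF that])
    then show ?thesis by (simp add: L1 L3)
  qed
  have Zk: "qpoch (q/z) q k * z^k = (-1)^k * (\<Prod>i<k. q^Suc i - z)" for k
  proof -
    have "qpoch (q/z) q k * z^k = (\<Prod>i<k. (1 - q/z*q^i) * z)"
      by (simp add: qpoch_def prod.distrib prod_constant)
    also have "\<dots> = (\<Prod>i<k. z - q^Suc i)" using z0 by (intro prod.cong) (simp_all add: field_simps)
    also have "\<dots> = (-1)^k * (\<Prod>i<k. q^Suc i - z)" by (rule negprod)
    finally show ?thesis .
  qed
  have sgn: "(-1::'a)^k * (-1)^k = 1" for k by (simp flip: power_mult_distrib)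
  have F1: "qbinom q n k * qpoch (q/z) q k * qpoch z q (n-k) * z^k = K * (P (t k) / W k)"
    if "k \<le> n" for k
  proof -
    have "qbinom q n k * qpoch (q/z) q k * qpoch z q (n-k) * z^k
        = K / (qpoch q q k * qpoch q q (n-k)) * ((-1)^k * (\<Prod>i<k. q^Suc i - z)) * qpoch z q (n-k)"
      using that Zk[of k] by (simp add: qbinom_def K_def mult_ac)
    also have "\<dots> = K * (P (t k) / W k)"
      unfolding Pk[OF that] Wk[OF that] using Qne[OF that] Qne[of "n-k"] q0 sgn[of k]
      by (simp add: field_simps)
    finally show ?thesis .
  qed
  have GLi: "(\<Sum>k\<in>{0..n}-{m}. P (t k) / (W k * (t m - t k))) = P (t m) / W m * (A - B)"
    using GL[OF inj mn rt] by (simp add: P_def W_def A_def B_def)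
  have tmk: "t m - t k \<noteq> 0" if "k \<in> {0..n}-{m}" for k
    using that tne[of m k] tne[of k m] mn by (cases "k < m") auto
  have LHS: "(\<Sum>k\<in>{0..n} - {m}. qbinom q n k * qpoch (q / z) q k * qpoch z q (n - k)
             / (1 - q powi (int k - int m)) * z ^ k) = q^m * K * (P (t m) / W m * (A - B))"
  proof -
    have "(\<Sum>k\<in>{0..n} - {m}. qbinom q n k * qpoch (q / z) q k * qpoch z q (n - k)
             / (1 - q powi (int k - int m)) * z ^ k) = (\<Sum>k\<in>{0..n} - {m}. q^m * K * (P (t k) / (W k * (t m - t k))))"
    proof (rule sum.cong[OF refl])
      fix k assume k: "k \<in> {0..n} - {m}"
      have den: "1 - q powi (int k - int m) = (t m - t k) / q^m"
        using qk0[of m] by (simp add: pw t_def field_simps)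
      have "qbinom q n k * qpoch (q / z) q k * qpoch z q (n - k)
             / (1 - q powi (int k - int m)) * z ^ k
          = (qbinom q n k * qpoch (q/z) q k * qpoch z q (n-k) * z^k) * q^m / (t m - t k)"
        unfolding den using tmk[OF k] qk0[of m] by (simp add: field_simps)
      also have "\<dots> = q^m * K * (P (t k) / (W k * (t m - t k)))"
        using F1[of k] k by (simp add: field_simps)
      finally show "qbinom q n k * qpoch (q / z) q k * qpoch z q (n - k)
             / (1 - q powi (int k - int m)) * z ^ k = q^m * K * (P (t k) / (W k * (t m - t k)))" .
    qed
    also have "\<dots> = q^m * K * (\<Sum>k\<in>{0..n}-{m}. P (t k) / (W k * (t m - t k)))"
      by (simp add: sum_distrib_left)
    finally show ?thesis using GLi by simp
  qed
  have coef: "(-1) ^ m * q ^ ((m + 1) choose 2) * qbinom q n m * qpoch (z * q powi (- int m)) q n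
      = K * (P (t m) / W m)"
  proof -
    have Pm: "P (t m) = q^(m*n) * qpoch (z * q powi (- int m)) q n"
    proof -
      have "P (t m) = (\<Prod>i<n. q^m * (1 - z / q^m * q^i))"
        unfolding P_def t_def r_def using qk0[of m] by (intro prod.cong) (simp_all add: field_simps)
      then show ?thesis by (simp add: pwm prod.distrib prod_constant qpoch_def power_mult)
    qed
    have ex: "q^(m*n) = q^((m + 1) choose 2) * (q^(m choose 2) * q^(m*(n-m)))"
    proof -
      have "m*n = ((m+1) choose 2) + (m choose 2) + m*(n-m)"
        using choose_sq[of m] mn by (simp add: diff_mult_distrib2)
      then show ?thesis by (simp add: power_add)
    qed
    show ?thesis
      unfolding Pm Wk[OF mn] ex using Qne[OF mn] Qne[of "n-m"] qk0 sgn[of m]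
      by (simp add: qbinom_def K_def mn field_simps)
  qed
  have S1: "(\<Sum>k<n. z * q powi (int k - int m) / (1 - z * q powi (int k - int m))) = q^m * A - of_nat n"
  proof -
    have "(\<Sum>k<n. z * q powi (int k - int m) / (1 - z * q powi (int k - int m)))
        = (\<Sum>k<n. q^m * (1/(t m - r k)) - 1)"
    proof (rule sum.cong[OF refl])
      fix k assume "k \<in> {..<n}"
      then have "t m - r k \<noteq> 0" using rt by auto
      then show "z * q powi (int k - int m) / (1 - z * q powi (int k - int m)) = q^m * (1/(t m - r k)) - 1"
        using q0 by (simp add: pw t_def r_def field_simps)
    qed
    then show ?thesis by (simp add: sum_subtractf A_def sum_distrib_left)
  qed
  have S2: "(\<Sum>k\<in>{0..n} - {m}. q powi (int k - int m) / (1 - q powi (int k - int m))) = q^m * B - of_nat n"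
  proof -
    have "(\<Sum>k\<in>{0..n} - {m}. q powi (int k - int m) / (1 - q powi (int k - int m)))
        = (\<Sum>k\<in>{0..n} - {m}. q^m * (1/(t m - t k)) - 1)"
    proof (rule sum.cong[OF refl])
      fix k assume k: "k \<in> {0..n} - {m}"
      show "q powi (int k - int m) / (1 - q powi (int k - int m)) = q^m * (1/(t m - t k)) - 1"
        using tmk[OF k] q0 by (simp add: pw t_def field_simps)
    qed
    moreover have "card ({0..n} - {m}) = n" using mn by simp
    ultimately show ?thesis by (simp add: sum_subtractf B_def sum_distrib_left)
  qed
  show ?thesis unfolding LHS coef S1 S2 by (simp add: divide_inverse algebra_simps)
qed

end
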